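(* For every $n\in\mathbb N$, the invariant $c_n$ of ordered virtual tangles is a GPV finite type invariant of degree $n$.
   Context: An $n$-tangle ($n\ge 1$) is a collection of $n$ disjoint oriented intervals ("strings") and finitely many oriented circles properly embedded in the 3-ball with string endpoints at prescribed boundary points; virtual tangle diagrams may contain, besides classical (real) crossings, virtual crossings (no over/under information), and virtual tangles are such diagrams modulo classical and virtual Reidemeister moves. For a string, its source is its input and its target its output. A tangle with $n$ strings is ordered if its $2n$ endpoints are numbered by integers $j_1<\dots<j_{2n}$ (up to monotone relabeling) so that every input receives some $j_{2k-1}$ and every output some $j_{2k}$; the ordering is coherent if for each $k$ the string with input $j_{2k-1}$ has output $j_{2k}$. For an ordered tangle diagram $D$: a state $S$ is a set of real crossings; $D(S)$ is obtained by smoothing each crossing of $S$ respecting orientations and inherits the endpoint numbering. $S$ is coherent if $D(S)$ has no closed components and its ordering is coherent. For coherent $S$, traverse $D(S)$ along the string from $j_1$ to $j_2$, then the string from $j_3$ to $j_4$, etc.; the neighborhood of each smoothed crossing is passed twice, and $S$ is descending if for each crossing of $S$ its neighborhood is first entered along the former overpass. $\operatorname{sign}(S)$ is the product of local writhes of the crossings of $S$. Define $c_n(D)=\sum\operatorname{sign}(S)$ over descending states with $n$ crossings; it is an invariant of ordered virtual tangles. GPV finite type. Given a virtual tangle diagram $D$ with $m$ marked, ordered real crossings $d_1,\dots,d_m$ and $I=(i_1,\dots,i_m)\in\{0,1\}^m$, let $D_I$ be obtained from $D$ by turning each $d_k$ with $i_k=1$ into a virtual crossing, and $|I|=\sum_k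 i_k$. An invariant $v$ is of GPV degree less than $m$ if $\sum_{I\in\{0,1\}^m}(-1)^{|I|}v(D_I)=0$ for all such $D$ and choices of crossings. $v$ is of GPV degree $n$ if it is of degree less than $n+1$ but not of degree less than $n$. *)

theory Defs
  imports Main
begin

text \<open>
  Virtual crossings carry no combinatorial information (detour moves), so a
  virtual tangle diagram is recorded by:
  a finite set of points on its components (string endpoints, the two
  passages through each real crossing, and possibly further plain points,
  e.g. on crossingless circles), the successor map along the orientation,
  the input/output endpoints with their integer numbering, and for every real
  crossing its over-passage point, its under-passage point and its local writhe.
\<close>

record tdiag =
  pts   :: "nat set"
  nxt   :: "nat \<Rightarrow> nat"
  ins   :: "nat set"
  outs  :: "nat set"
  lab   :: "nat \<Rightarrow> nat"
  xings :: "nat set"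
  ov    :: "nat \<Rightarrow> nat"
  un    :: "nat \<Rightarrow> nat"
  wr    :: "nat \<Rightarrow> int"

definition endpts :: "tdiag \<Rightarrow> nat set" where
  "endpts D = ins D \<union> outs D"

text \<open>0-based rank of a label among the endpoint labels.\<close>
definition rank :: "tdiag \<Rightarrow> nat \<Rightarrow> nat" where
  "rank D l = card {y \<in> endpts D. lab D y < l}"

text \<open>The successor map is a bijection from non-outputs to non-inputs, so the
  components are oriented intervals from an input to an output and oriented
  circles.  The ordering: inputs get labels of odd 1-based rank j_{2k-1},
  outputs labels of even rank j_{2k}.\<close>
definition wf_tangle :: "tdiag \<Rightarrow> bool" where
  "wf_tangle D \<longleftrightarrow>
     finite (pts D) \<and> finite (xings D) \<and>
     ins D \<subseteq> pts D \<and> outs D \<subseteq> pts D \<and> ins D \<inter> outs D = {} \<and> ins D \<noteq> {} \<and>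
     bij_betw (nxt D) (pts D - outs D) (pts D - ins D) \<and>
     inj_on (ov D) (xings D) \<and> inj_on (un D) (xings D) \<and>
     ov D ` xings D \<inter> un D ` xings D = {} \<and>
     ov D ` xings D \<subseteq> pts D - endpts D \<and> un D ` xings D \<subseteq> pts D - endpts D \<and>
     (\<forall>c \<in> xings D. wr D c = 1 \<or> wr D c = -1) \<and>
     inj_on (lab D) (endpts D) \<and>
     (\<forall>e \<in> endpts D. (e \<in> ins D \<longleftrightarrow> even (rank D (lab D e))))"

text \<open>Successor map of the smoothed diagram D(S): the oriented smoothing of
  crossing c joins the incoming overpass to the outgoing underpass and the
  incoming underpass to the outgoing overpass.  The point ov c thus lies on the
  piece of D(S) entering the smoothed crossing along the former overpass, and
  un c on the piece entering along the former underpass.\<close>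
definition snxt :: "tdiag \<Rightarrow> nat set \<Rightarrow> nat \<Rightarrow> nat" where
  "snxt D S x =
     (if \<exists>c \<in> S. x = ov D c then nxt D (un D (THE c. c \<in> S \<and> x = ov D c))
      else if \<exists>c \<in> S. x = un D c then nxt D (ov D (THE c. c \<in> S \<and> x = un D c))
      else nxt D x)"

definition on_path :: "tdiag \<Rightarrow> nat set \<Rightarrow> nat \<Rightarrow> nat \<Rightarrow> nat \<Rightarrow> bool" where
  "on_path D S e d x \<longleftrightarrow> e \<in> ins D \<and> (snxt D S ^^ d) e = x \<and>
     (\<forall>d' < d. (snxt D S ^^ d') e \<notin> outs D)"

text \<open>Coherent state: D(S) has no closed components (every point lies on a
  string), and the ordering of D(S) is coherent (the string with input j_{2k-1}
  has output j_{2k}).\<close>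
definition coherent :: "tdiag \<Rightarrow> nat set \<Rightarrow> bool" where
  "coherent D S \<longleftrightarrow> S \<subseteq> xings D \<and>
     (\<forall>x \<in> pts D. \<exists>e d. on_path D S e d x) \<and>
     (\<forall>e d x. on_path D S e d x \<and> x \<in> outs D \<longrightarrow>
        rank D (lab D x) = Suc (rank D (lab D e)))"

text \<open>Traversal of D(S): first the string from j_1, then from j_3, etc.
  visited_before D S x y: x is passed before y.\<close>
definition visited_before :: "tdiag \<Rightarrow> nat set \<Rightarrow> nat \<Rightarrow> nat \<Rightarrow> bool" where
  "visited_before D S x y \<longleftrightarrow>
     (\<exists>e1 d1 e2 d2. on_path D S e1 d1 x \<and> on_path D S e2 d2 y \<and>
        (lab D e1 < lab D e2 \<or> (e1 = e2 \<and> d1 < d2)))"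

definition descending :: "tdiag \<Rightarrow> nat set \<Rightarrow> bool" where
  "descending D S \<longleftrightarrow> (\<forall>c \<in> S. visited_before D S (ov D c) (un D c))"

definition state_sign :: "tdiag \<Rightarrow> nat set \<Rightarrow> int" where
  "state_sign D S = (\<Prod>c \<in> S. wr D c)"

definition c_inv :: "nat \<Rightarrow> tdiag \<Rightarrow> int" where
  "c_inv n D = (\<Sum>S \<in> {S. S \<subseteq> xings D \<and> card S = n \<and> coherent D S \<and> descending D S}.
                  state_sign D S)"

definition virtualize :: "nat set \<Rightarrow> tdiag \<Rightarrow> tdiag" where
  "virtualize T D = D\<lparr>xings := xings D - T\<rparr>"

text \<open>GPV degree less than m (marked crossings d_1..d_m, distinct; the sum over
  I in {0,1}^m is the sum over the subsets T of marked crossings turned virtual).\<close>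
definition gpv_degree_less :: "(tdiag \<Rightarrow> int) \<Rightarrow> nat \<Rightarrow> bool" where
  "gpv_degree_less v m \<longleftrightarrow>
     (\<forall>D M. wf_tangle D \<and> M \<subseteq> xings D \<and> card M = m \<longrightarrow>
        (\<Sum>T \<in> Pow M. (-1) ^ card T * v (virtualize T D)) = 0)"

definition gpv_degree :: "(tdiag \<Rightarrow> int) \<Rightarrow> nat \<Rightarrow> bool" where
  "gpv_degree v n \<longleftrightarrow> gpv_degree_less v (Suc n) \<and> \<not> gpv_degree_less v n"

end

theory Submission
  imports Defs
begin

lemma alt_pow:
  assumes "finite X"
  shows "(\<Sum>T\<in>Pow X. (-1::int) ^ card T) = (if X = {} then 1 else 0)"
proof -
  have "(\<Prod>x\<in>X. (1::int) - 1) = (\<Sum>T\<in>Pow X. (-1) ^ card T * (\<Prod>x\<in>T. 1) * (\<Prod>x\<in>X-T. 1))"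
    by (rule prod_diff_conv_sum[OF assms])
  moreover have "X \<noteq> {} \<Longrightarrow> (0::int) ^ card X = 0" using assms
    by (simp add: card_gt_0_iff)
  ultimately show ?thesis by auto
qed

lemma virt_simps:
  "snxt (virtualize T D) = snxt D"
  "on_path (virtualize T D) = on_path D"
  "rank (virtualize T D) = rank D"
  "visited_before (virtualize T D) = visited_before D"
  "descending (virtualize T D) = descending D"
  "state_sign (virtualize T D) = state_sign D"
  "xings (virtualize T D) = xings D - T"
proof -
  show 1: "snxt (virtualize T D) = snxt D"
    by (simp add: virtualize_def fun_eq_iff snxt_def)
  show 2: "on_path (virtualize T D) = on_path D"
    by (simp add: virtualize_def fun_eq_iff on_path_def 1[unfolded virtualize_def])
  show "rank (virtualize T D) = rank D"
    by (simp add: virtualize_def fun_eq_iff rank_def endpts_def)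
  show 3: "visited_before (virtualize T D) = visited_before D"
    by (simp add: fun_eq_iff visited_before_def 2) (simp add: virtualize_def)
  show "descending (virtualize T D) = descending D"
    by (simp add: fun_eq_iff descending_def 3) (simp add: virtualize_def)
  show "state_sign (virtualize T D) = state_sign D"
    by (simp add: virtualize_def fun_eq_iff state_sign_def)
  show "xings (virtualize T D) = xings D - T"
    by (simp add: virtualize_def)
qed

lemma coherent_virt:
  "coherent (virtualize T D) S \<longleftrightarrow> S \<inter> T = {} \<and> coherent D S"
  unfolding coherent_def virt_simps by (auto simp: virtualize_def)

lemma c_inv_virt:
  assumes fin: "finite (xings D)"
  shows "c_inv n (virtualize T D) =
    (\<Sum>S \<in> {S. S \<subseteq> xings D \<and> card S = n \<and> coherent D S \<and> descending D S}.
        if S \<inter> T = {} then state_sign D S else 0)"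
proof -
  have "{S. S \<subseteq> xings (virtualize T D) \<and> card S = n \<and> coherent (virtualize T D) S \<and> descending (virtualize T D) S}
      = {S \<in> {S. S \<subseteq> xings D \<and> card S = n \<and> coherent D S \<and> descending D S}. S \<inter> T = {}}"
    by (auto simp: virt_simps coherent_virt)
  moreover have "finite {S. S \<subseteq> xings D \<and> card S = n \<and> coherent D S \<and> descending D S}"
    by (rule finite_subset[of _ "Pow (xings D)"]) (use fin in auto)
  ultimately show ?thesis
    unfolding c_inv_def by (simp only: sum.inter_filter virt_simps(6))
qed

lemma alt_sum:
  assumes fin: "finite (xings D)" and M: "finite M"
  shows "(\<Sum>T \<in> Pow M. (-1) ^ card T * c_inv n (virtualize T D)) =
     (\<Sum>S \<in> {S. S \<subseteq> xings D \<and> card S = n \<and> coherent D S \<and> descending D S}.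
        state_sign D S * (if M - S = {} then 1 else 0))"
proof -
  let ?A = "{S. S \<subseteq> xings D \<and> card S = n \<and> coherent D S \<and> descending D S}"
  have finA: "finite ?A" by (rule finite_subset[of _ "Pow (xings D)"]) (use fin in auto)
  have "(\<Sum>T \<in> Pow M. (-1) ^ card T * c_inv n (virtualize T D)) =
     (\<Sum>T \<in> Pow M. \<Sum>S \<in> ?A. (-1) ^ card T * (if S \<inter> T = {} then state_sign D S else 0))"
    by (simp add: c_inv_virt[OF fin] sum_distrib_left)
  also have "\<dots> = (\<Sum>S \<in> ?A. \<Sum>T \<in> Pow M. (-1) ^ card T * (if S \<inter> T = {} then state_sign D S else 0))"
    by (rule sum.swap)
  also have "\<dots> = (\<Sum>S \<in> ?A. state_sign D S * (\<Sum>T \<in> Pow (M - S). (-1) ^ card T))"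
  proof (rule sum.cong[OF refl])
    fix S
    have "(\<Sum>T \<in> Pow M. (-1::int) ^ card T * (if S \<inter> T = {} then state_sign D S else 0))
        = (\<Sum>T \<in> {T \<in> Pow M. S \<inter> T = {}}. state_sign D S * (-1) ^ card T)"
      using M by (simp add: sum.inter_filter[symmetric] if_distrib mult.commute cong: if_cong)
    also have "{T \<in> Pow M. S \<inter> T = {}} = Pow (M - S)" by auto
    finally show "(\<Sum>T \<in> Pow M. (-1::int) ^ card T * (if S \<inter> T = {} then state_sign D S else 0))
        = state_sign D S * (\<Sum>T \<in> Pow (M - S). (-1) ^ card T)"
      by (simp add: sum_distrib_left)
  qed
  also have "\<dots> = (\<Sum>S \<in> ?A. state_sign D S * (if M - S = {} then 1 else 0))"
    using M by (simp add: alt_pow)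
  finally show ?thesis .
qed

lemma part1: "gpv_degree_less (c_inv n) (Suc n)"
  unfolding gpv_degree_less_def
proof (intro allI impI)
  fix D M assume a: "wf_tangle D \<and> M \<subseteq> xings D \<and> card M = Suc n"
  have fin: "finite (xings D)" using a by (simp add: wf_tangle_def)
  have M: "finite M" using a fin finite_subset by blast
  show "(\<Sum>T \<in> Pow M. (-1) ^ card T * c_inv n (virtualize T D)) = 0"
    unfolding alt_sum[OF fin M]
  proof (rule sum.neutral, rule ballI)
    fix S assume "S \<in> {S. S \<subseteq> xings D \<and> card S = n \<and> coherent D S \<and> descending D S}"
    then have "card S = n" "finite S" using fin finite_subset by auto
    then have "M - S \<noteq> {}" using a
      by (metis Diff_eq_empty_iff card_mono lessI not_le)
    then show "state_sign D S * (if M - S = {} then 1 else 0) = 0" by simp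
  qed
qed

definition Pn :: "nat \<Rightarrow> nat set" where
  "Pn n = {x. x < 6*n \<or> x = 6*n \<or> x = 6*n+3 \<or> x = 6*n+4}"

definition nx :: "nat \<Rightarrow> nat" where
  "nx x = (if x mod 6 = 0 then x+4 else if x mod 6 = 4 then x-1 else
           if x mod 6 = 2 then x+3 else if x mod 6 = 5 then x-4 else x)"

definition nxinv :: "nat \<Rightarrow> nat" where
  "nxinv x = (if x mod 6 = 4 then x-4 else if x mod 6 = 3 then x+1 else
           if x mod 6 = 5 then x-3 else if x mod 6 = 1 then x+4 else x)"

definition Dn :: "nat \<Rightarrow> tdiag" where
  "Dn n = \<lparr>pts = Pn n, nxt = nx, ins = {x \<in> Pn n. x mod 6 = 0 \<or> x mod 6 = 2},
     outs = {x \<in> Pn n. x mod 6 = 1 \<or> x mod 6 = 3}, lab = id, xings = {..<n},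
     ov = \<lambda>k. 6*k+4, un = \<lambda>k. 6*k+5, wr = \<lambda>_. 1\<rparr>"

lemma Dn_simps:
  "pts (Dn n) = Pn n" "nxt (Dn n) = nx" "ins (Dn n) = {x \<in> Pn n. x mod 6 = 0 \<or> x mod 6 = 2}"
  "outs (Dn n) = {x \<in> Pn n. x mod 6 = 1 \<or> x mod 6 = 3}" "lab (Dn n) = id"
  "xings (Dn n) = {..<n}" "ov (Dn n) = (\<lambda>k. 6*k+4)" "un (Dn n) = (\<lambda>k. 6*k+5)"
  "wr (Dn n) = (\<lambda>_. 1)"
  by (simp_all add: Dn_def)

lemma endpts_Dn: "endpts (Dn n) = {x \<in> Pn n. x mod 6 < 4}"
  unfolding endpts_def Dn_simps by auto

lemma cnt0: "i \<le> 4 \<Longrightarrow> card {y. y < 6*k+i \<and> y mod 6 < (4::nat)} = 4*k+i"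
proof (induction k arbitrary: i)
  case 0
  have "{y. y < i \<and> y mod 6 < (4::nat)} = {..<i}" using 0 by auto
  then show ?case by simp
next
  case (Suc k)
  have e: "{y. y < 6*Suc k+i \<and> y mod 6 < (4::nat)} = {y. y < 6*k+4 \<and> y mod 6 < (4::nat)} \<union> {6*k+6..<6*k+6+i}"
    using Suc.prems by auto presburger+
  have "card {y. y < 6*Suc k+i \<and> y mod 6 < (4::nat)} = card {y. y < 6*k+4 \<and> y mod 6 < (4::nat)} + card {6*k+6..<6*k+6+i}"
    unfolding e by (rule card_Un_disjoint) auto
  also have "\<dots> = 4*k+4+i" using Suc.IH[of 4] by simp
  finally show ?case by simp
qed

lemma rank_Dn:
  assumes x: "x \<in> endpts (Dn n)"
  shows "rank (Dn n) x = (if x = 6*n+3 then 4*n+1 else 4*(x div 6) + x mod 6)"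
proof (cases "x = 6*n+3")
  case True
  have "{y \<in> endpts (Dn n). lab (Dn n) y < x} = {y. y < 6*n+1 \<and> y mod 6 < (4::nat)}"
    using True unfolding endpts_Dn Dn_simps Pn_def by auto
  then show ?thesis using True cnt0[of 1 n] unfolding rank_def by simp
next
  case False
  have xm: "x mod 6 < 4" "x \<le> 6*n" using x False unfolding endpts_Dn Pn_def by auto
  have "{y \<in> endpts (Dn n). lab (Dn n) y < x} = {y. y < 6*(x div 6) + x mod 6 \<and> y mod 6 < (4::nat)}"
    using xm unfolding endpts_Dn Dn_simps Pn_def by auto
  then show ?thesis using False cnt0[of "x mod 6" "x div 6"] xm unfolding rank_def by simp
qed


lemma six_cases:
  fixes x :: nat
  obtains k where "x = 6*k" | k where "x = 6*k+1" | k where "x = 6*k+2"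
    | k where "x = 6*k+3" | k where "x = 6*k+4" | k where "x = 6*k+5"
proof -
  have "x = 6*(x div 6) + x mod 6" by simp
  moreover have "x mod 6 = 0 \<or> x mod 6 = 1 \<or> x mod 6 = 2 \<or> x mod 6 = 3 \<or> x mod 6 = 4 \<or> x mod 6 = 5" by presburger
  ultimately show ?thesis using that by (elim disjE) (metis add_0_right)+
qed

lemma m6 [simp]:
  "(6*k) mod 6 = (0::nat)" "Suc (6*k) mod 6 = 1" "Suc (Suc (6*k)) mod 6 = 2"
  "Suc (Suc (Suc (6*k))) mod 6 = 3" "Suc (Suc (Suc (Suc (6*k)))) mod 6 = 4"
  "Suc (Suc (Suc (Suc (Suc (6*k))))) mod 6 = 5"
  "(6*k+1) mod 6 = 1" "(6*k+2) mod 6 = 2" "(6*k+3) mod 6 = 3" "(6*k+4) mod 6 = 4" "(6*k+5) mod 6 = 5"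
  by presburger+

lemma bij_Dn: "bij_betw nx (Pn n - outs (Dn n)) (Pn n - ins (Dn n))"
proof (rule bij_betw_byWitness[where f'=nxinv])
  show "\<forall>a\<in>Pn n - outs (Dn n). nxinv (nx a) = a"
  proof
    fix a assume "a \<in> Pn n - outs (Dn n)"
    then show "nxinv (nx a) = a"
      by (cases a rule: six_cases; auto simp: Dn_simps Pn_def nx_def nxinv_def; presburger)
  qed
  show "\<forall>a\<in>Pn n - ins (Dn n). nx (nxinv a) = a"
  proof
    fix a assume "a \<in> Pn n - ins (Dn n)"
    then show "nx (nxinv a) = a"
      by (cases a rule: six_cases; auto simp: Dn_simps Pn_def nx_def nxinv_def; presburger)
  qed
  show "nx ` (Pn n - outs (Dn n)) \<subseteq> Pn n - ins (Dn n)"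
  proof
    fix b assume "b \<in> nx ` (Pn n - outs (Dn n))"
    then obtain a where "a \<in> Pn n - outs (Dn n)" "b = nx a" by auto
    then show "b \<in> Pn n - ins (Dn n)"
      by (cases a rule: six_cases; auto simp: Dn_simps Pn_def nx_def; presburger)
  qed
  show "nxinv ` (Pn n - ins (Dn n)) \<subseteq> Pn n - outs (Dn n)"
  proof
    fix b assume "b \<in> nxinv ` (Pn n - ins (Dn n))"
    then obtain a where "a \<in> Pn n - ins (Dn n)" "b = nxinv a" by auto
    then show "b \<in> Pn n - outs (Dn n)"
      by (cases a rule: six_cases; auto simp: Dn_simps Pn_def nxinv_def; presburger)
  qed
qed

lemma wf_Dn: "wf_tangle (Dn n)"
proof -
  have ranks: "\<forall>e \<in> endpts (Dn n). (e \<in> ins (Dn n) \<longleftrightarrow> even (rank (Dn n) (lab (Dn n) e)))"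
  proof
    fix e assume e: "e \<in> endpts (Dn n)"
    have m: "e mod 6 < 4" using e by (simp add: endpts_Dn)
    show "(e \<in> ins (Dn n) \<longleftrightarrow> even (rank (Dn n) (lab (Dn n) e)))"
    proof (cases "e = 6*n+3")
      case True then show ?thesis using rank_Dn[OF e] by (simp add: Dn_simps)
    next
      case False
      have "even (4*(e div 6) + e mod 6) \<longleftrightarrow> even (e mod 6)" by simp
      moreover have "even (e mod 6) \<longleftrightarrow> e mod 6 = 0 \<or> e mod 6 = 2" using m by presburger
      ultimately show ?thesis using rank_Dn[OF e] False e
        by (simp add: Dn_simps endpts_Dn)
    qed
  qed
  have fin: "finite (Pn n)" by (rule finite_subset[of _ "{..<6*n+5}"]) (auto simp: Pn_def)
  have ovun: "(\<lambda>k. 6*k+4) ` {..<n} \<inter> (\<lambda>k. 6*k+5) ` {..<(n::nat)} = {}"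
    by auto presburger
  have ovp: "(\<lambda>k. 6*k+4) ` {..<n} \<subseteq> Pn n - endpts (Dn n)"
    by (auto simp: endpts_Dn Pn_def; presburger)
  have unp: "(\<lambda>k. 6*k+5) ` {..<n} \<subseteq> Pn n - endpts (Dn n)"
    by (auto simp: endpts_Dn Pn_def; presburger)
  have ne: "ins (Dn n) \<noteq> {}" by (auto simp: Dn_simps Pn_def)
  show ?thesis unfolding wf_tangle_def
    using bij_Dn ranks fin ovun ovp unp ne unfolding Dn_simps
    by (auto simp: inj_on_def; presburger)
qed

definition sn :: "nat \<Rightarrow> nat \<Rightarrow> nat" where
  "sn n x = (if x < 6*n \<and> x mod 6 = 4 then x-3 else if x < 6*n \<and> x mod 6 = 5 then x - 2 else nx x)"

lemma dm6: "x mod 6 = (r::nat) \<Longrightarrow> x = 6*(x div 6)+r" by (metis div_mult_mod_eq mult.commute)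

lemma snxt_Dn: "snxt (Dn n) {..<n} x = sn n x"
proof -
  have A: "(\<exists>c \<in> {..<n}. x = 6*c+4) \<longleftrightarrow> x < 6*n \<and> x mod 6 = 4"
  proof
    assume "x < 6*n \<and> x mod 6 = 4"
    then have "x = 6*(x div 6)+4" "x div 6 < n" using dm6[of x 4] by linarith+
    then show "\<exists>c \<in> {..<n}. x = 6*c+4" by blast
  qed auto
  have B: "(\<exists>c \<in> {..<n}. x = 6*c+5) \<longleftrightarrow> x < 6*n \<and> x mod 6 = 5"
  proof
    assume "x < 6*n \<and> x mod 6 = 5"
    then have "x = 6*(x div 6)+5" "x div 6 < n" using dm6[of x 5] by linarith+
    then show "\<exists>c \<in> {..<n}. x = 6*c+5" by blast
  qed auto
  show ?thesis
  proof (cases "x < 6*n \<and> x mod 6 = 4")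
    case True
    then obtain k where x: "x = 6*k + 4" using A by blast
    have "(THE c. c \<in> {..<n} \<and> x = 6*c+4) = k"
      by (rule the_equality) (use True x in auto)
    moreover have "nx (6*k+5) = x - 3" using x unfolding nx_def by simp
    ultimately show ?thesis using A True unfolding snxt_def sn_def Dn_simps by simp
  next
    case F1: False
    show ?thesis
    proof (cases "x < 6*n \<and> x mod 6 = 5")
      case True
      then obtain k where x: "x = 6*k + 5" using B by blast
      have "(THE c. c \<in> {..<n} \<and> x = 6*c+5) = k"
        by (rule the_equality) (use True x in auto)
      moreover have "nx (6*k+4) = x - 2" using x unfolding nx_def by simp
      moreover have "\<not> (\<exists>c \<in> {..<n}. x = 6*c+4)" using A F1 by blast
      ultimately show ?thesis using B True unfolding snxt_def sn_def Dn_simps by simp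
    next
      case False
      have n4: "\<not> (\<exists>c \<in> {..<n}. x = 6*c+4)" using A F1 by blast
      have n5: "\<not> (\<exists>c \<in> {..<n}. x = 6*c+5)" using B False by blast
      have "snxt (Dn n) {..<n} x = nx x"
        unfolding snxt_def Dn_simps using n4 n5 by simp
      moreover have "sn n x = nx x" unfolding sn_def using F1 False by auto
      ultimately show ?thesis by simp
    qed
  qed
qed

lemma d6: "(6*k) div 6 = (k::nat)" "(6*k+1) div 6 = k" "(6*k+2) div 6 = k" "(6*k+3) div 6 = k" "(6*k+4) div 6 = k" "(6*k+5) div 6 = k"
  by simp_all

lemma snxt_Dn_fun: "snxt (Dn n) {..<n} = sn n"
  using snxt_Dn by (simp add: fun_eq_iff)

lemma ins_cases:
  assumes "e \<in> ins (Dn n)"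
  obtains k where "k < n" "e = 6*k" | k where "k < n" "e = 6*k+2" | "e = 6*n"
proof -
  have e: "e \<in> Pn n" "e mod 6 = 0 \<or> e mod 6 = 2" using assms by (auto simp: Dn_simps)
  show ?thesis
  proof (cases "e < 6*n")
    case True
    show ?thesis using e(2)
    proof
      assume "e mod 6 = 0"
      then have "e = 6*(e div 6)+0" "e div 6 < n" using dm6[of e 0] True by linarith+
      then show ?thesis using that(1) by simp
    next
      assume "e mod 6 = 2"
      then have "e = 6*(e div 6)+2" "e div 6 < n" using dm6[of e 2] True by linarith+
      then show ?thesis using that(2) by simp
    qed
  next
    case False
    then have "e = 6*n \<or> e = 6*n+3 \<or> e = 6*n+4" using e(1) by (auto simp: Pn_def)
    then show ?thesis using e(2) that(3) by auto
  qed
qed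

lemma ins_facts:
  assumes "e \<in> ins (Dn n)"
  shows "e \<notin> outs (Dn n)" "sn n e \<notin> outs (Dn n)" "sn n (sn n e) \<in> outs (Dn n)"
    "rank (Dn n) (sn n (sn n e)) = Suc (rank (Dn n) e)"
  using assms
  by (cases rule: ins_cases; simp add: sn_def nx_def Dn_simps Pn_def rank_Dn endpts_Dn d6)+

lemma on_path_Dn:
  "on_path (Dn n) {..<n} e d x \<longleftrightarrow> e \<in> ins (Dn n) \<and>
     ((d = 0 \<and> x = e) \<or> (d = 1 \<and> x = sn n e) \<or> (d = 2 \<and> x = sn n (sn n e)))"
proof
  assume h: "on_path (Dn n) {..<n} e d x"
  then have e: "e \<in> ins (Dn n)" and x: "(sn n ^^ d) e = x"
    and nd: "\<forall>d'<d. (sn n ^^ d') e \<notin> outs (Dn n)"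
    unfolding on_path_def snxt_Dn_fun by auto
  have "d \<le> 2"
  proof (rule ccontr)
    assume "\<not> d \<le> 2"
    then have "(sn n ^^ 2) e \<notin> outs (Dn n)" using nd by auto
    then show False using ins_facts(3)[OF e] by (simp add: numeral_2_eq_2)
  qed
  then have "d = 0 \<or> d = 1 \<or> d = 2" by auto
  then show "e \<in> ins (Dn n) \<and>
     ((d = 0 \<and> x = e) \<or> (d = 1 \<and> x = sn n e) \<or> (d = 2 \<and> x = sn n (sn n e)))"
    using e x by (auto simp: numeral_2_eq_2)
next
  assume h: "e \<in> ins (Dn n) \<and>
     ((d = 0 \<and> x = e) \<or> (d = 1 \<and> x = sn n e) \<or> (d = 2 \<and> x = sn n (sn n e)))"
  then have e: "e \<in> ins (Dn n)" by simp
  have "\<forall>d'<d. (sn n ^^ d') e \<notin> outs (Dn n)"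
    using h ins_facts(1,2)[OF e] by (auto simp: numeral_2_eq_2 less_Suc_eq)
  then show "on_path (Dn n) {..<n} e d x"
    using h unfolding on_path_def snxt_Dn_fun by (auto simp: numeral_2_eq_2)
qed

lemma coherent_Dn: "coherent (Dn n) {..<n}"
  unfolding coherent_def
proof (intro conjI allI impI ballI)
  show "{..<n} \<subseteq> xings (Dn n)" by (simp add: Dn_simps)
next
  fix e d x assume h: "on_path (Dn n) {..<n} e d x \<and> x \<in> outs (Dn n)"
  then have e: "e \<in> ins (Dn n)" and x: "x = sn n (sn n e)"
    using ins_facts[of e n] by (auto simp: on_path_Dn)
  show "rank (Dn n) (lab (Dn n) x) = Suc (rank (Dn n) (lab (Dn n) e))"
    using ins_facts(4)[OF e] x by (simp add: Dn_simps)
next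
  fix x assume x: "x \<in> pts (Dn n)"
  show "\<exists>e d. on_path (Dn n) {..<n} e d x"
  proof (cases "x < 6*n")
    case True
    have c: "x mod 6 = 0 \<or> x mod 6 = 1 \<or> x mod 6 = 2 \<or> x mod 6 = 3 \<or> x mod 6 = 4 \<or> x mod 6 = 5"
      by presburger
    define k where "k = x div 6"
    have k: "k < n" using True dm6[of x "x mod 6"] unfolding k_def by linarith
    have kx: "x = 6*k + x mod 6" unfolding k_def by simp
    have ink: "6*k \<in> ins (Dn n)" "6*k+2 \<in> ins (Dn n)" using k by (auto simp: Dn_simps Pn_def)
    from c show ?thesis
    proof (elim disjE)
      assume "x mod 6 = 0" then have "on_path (Dn n) {..<n} (6*k) 0 x" using kx ink by (simp add: on_path_Dn)
      then show ?thesis by blast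
    next
      assume "x mod 6 = 1" then have "on_path (Dn n) {..<n} (6*k) 2 x" using kx ink k
        by (simp add: on_path_Dn sn_def nx_def)
      then show ?thesis by blast
    next
      assume "x mod 6 = 2" then have "on_path (Dn n) {..<n} (6*k+2) 0 x" using kx ink by (simp add: on_path_Dn)
      then show ?thesis by blast
    next
      assume "x mod 6 = 3" then have "on_path (Dn n) {..<n} (6*k+2) 2 x" using kx ink k
        by (simp add: on_path_Dn sn_def nx_def)
      then show ?thesis by blast
    next
      assume "x mod 6 = 4" then have "on_path (Dn n) {..<n} (6*k) 1 x" using kx ink k
        by (simp add: on_path_Dn sn_def nx_def)
      then show ?thesis by blast
    next
      assume "x mod 6 = 5" then have "on_path (Dn n) {..<n} (6*k+2) 1 x" using kx ink k
        by (simp add: on_path_Dn sn_def nx_def)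
      then show ?thesis by blast
    qed
  next
    case False
    then have xx: "x = 6*n \<or> x = 6*n+3 \<or> x = 6*n+4" using x by (auto simp: Pn_def Dn_simps)
    have i: "6*n \<in> ins (Dn n)" by (auto simp: Dn_simps Pn_def)
    from xx show ?thesis
    proof (elim disjE)
      assume "x = 6*n" then have "on_path (Dn n) {..<n} (6*n) 0 x" using i by (simp add: on_path_Dn)
      then show ?thesis by blast
    next
      assume "x = 6*n+3" then have "on_path (Dn n) {..<n} (6*n) 2 x" using i by (simp add: on_path_Dn sn_def nx_def)
      then show ?thesis by blast
    next
      assume "x = 6*n+4" then have "on_path (Dn n) {..<n} (6*n) 1 x" using i by (simp add: on_path_Dn sn_def nx_def)
      then show ?thesis by blast
    qed
  qed
qed

lemma descending_Dn: "descending (Dn n) {..<n}"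
  unfolding descending_def visited_before_def
proof
  fix c assume c: "c \<in> {..<n}"
  have i: "6*c \<in> ins (Dn n)" "6*c+2 \<in> ins (Dn n)" using c by (auto simp: Dn_simps Pn_def)
  have "on_path (Dn n) {..<n} (6*c) 1 (ov (Dn n) c)" using i c by (simp add: on_path_Dn sn_def nx_def Dn_simps)
  moreover have "on_path (Dn n) {..<n} (6*c+2) 1 (un (Dn n) c)" using i c by (simp add: on_path_Dn sn_def nx_def Dn_simps)
  moreover have "lab (Dn n) (6*c) < lab (Dn n) (6*c+2)" by (simp add: Dn_simps)
  ultimately show "\<exists>e1 d1 e2 d2. on_path (Dn n) {..<n} e1 d1 (ov (Dn n) c) \<and> on_path (Dn n) {..<n} e2 d2 (un (Dn n) c) \<and>
        (lab (Dn n) e1 < lab (Dn n) e2 \<or> (e1 = e2 \<and> d1 < d2))" by blast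
qed

lemma part2: "\<not> gpv_degree_less (c_inv n) n"
proof
  assume h: "gpv_degree_less (c_inv n) n"
  have fin: "finite (xings (Dn n))" by (simp add: Dn_simps)
  have "(\<Sum>T \<in> Pow {..<n}. (-1) ^ card T * c_inv n (virtualize T (Dn n))) = 0"
    using h wf_Dn unfolding gpv_degree_less_def by (auto simp: Dn_simps)
  moreover have A: "{S. S \<subseteq> xings (Dn n) \<and> card S = n \<and> coherent (Dn n) S \<and> descending (Dn n) S} = {{..<n}}"
  proof (rule set_eqI, rule iffI)
    fix S assume "S \<in> {S. S \<subseteq> xings (Dn n) \<and> card S = n \<and> coherent (Dn n) S \<and> descending (Dn n) S}"
    then have "S \<subseteq> {..<n}" "card S = card {..<n}" by (auto simp: Dn_simps)
    then show "S \<in> {{..<n}}" using card_subset_eq[of "{..<n}" S] by auto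
  next
    fix S assume "S \<in> {{..<n}}"
    then show "S \<in> {S. S \<subseteq> xings (Dn n) \<and> card S = n \<and> coherent (Dn n) S \<and> descending (Dn n) S}"
      using coherent_Dn descending_Dn by (auto simp: Dn_simps)
  qed
  moreover have "state_sign (Dn n) {..<n} = 1" by (simp add: state_sign_def Dn_simps)
  ultimately show False unfolding alt_sum[OF fin finite_lessThan] by simp
qed

theorem mainTheorem5:
  fixes n :: nat
  shows "gpv_degree (c_inv n) n"
  unfolding gpv_degree_def using part1 part2 by blast

end
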